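(* Let $\mu:[0,1)\to(0,\infty)$ be decreasing and continuous with $\lim_{r\to1^-}\mu(r)=0$, and suppose there is $B>0$ with $\mu(1-d/2)\ge B\mu(1-d)$ for all $d\in(0,1]$. Suppose moreover that for every $q>1$ there exist $A(q)>1$ and $y_0$ such that for all $y>y_0$ and $x>qy$ one has $\mu(1-1/y)>A(q)\,\mu(1-1/x)$. Let $u(z)=\operatorname{Re}\sum_k a_{n_k}z^{n_k}$ be a Hadamard gap series ($n_k$ positive integers, $n_{k+1}\ge\lambda n_k$, $\lambda>1$). If $\sup_k n_k|a_{n_k}|\,\mu(1-1/n_k)<\infty$, then $u\in\mathcal{B}_\mu$.
   Context: The Bloch-type space $\mathcal{B}_\mu$ is the set of harmonic functions $u$ on the unit disk $\mathbb{D}$ with $\|u\|_{\mathcal{B}_\mu}=\sup_{z\in\mathbb{D}}\big(|u(0)|+\mu(|z|)\,|\nabla u(z)|\big)<\infty$. *)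

theory Defs
  imports "HOL-Analysis.Analysis"
begin

definition dx :: "(complex \<Rightarrow> real) \<Rightarrow> complex \<Rightarrow> real" where
  "dx u z = deriv (\<lambda>t::real. u (z + of_real t)) 0"

definition dy :: "(complex \<Rightarrow> real) \<Rightarrow> complex \<Rightarrow> real" where
  "dy u z = deriv (\<lambda>t::real. u (z + \<i> * of_real t)) 0"

definition harmonic_on :: "complex set \<Rightarrow> (complex \<Rightarrow> real) \<Rightarrow> bool" where
  "harmonic_on S u \<longleftrightarrow> open S \<and>
     (\<exists>ux uy uxx uxy uyx uyy. \<forall>z\<in>S.
        ((\<lambda>t. u (z + of_real t)) has_real_derivative ux z) (at 0) \<and>
        ((\<lambda>t. u (z + \<i> * of_real t)) has_real_derivative uy z) (at 0) \<and>
        ((\<lambda>t. ux (z + of_real t)) has_real_derivative uxx z) (at 0) \<and>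
        ((\<lambda>t. ux (z + \<i> * of_real t)) has_real_derivative uxy z) (at 0) \<and>
        ((\<lambda>t. uy (z + of_real t)) has_real_derivative uyx z) (at 0) \<and>
        ((\<lambda>t. uy (z + \<i> * of_real t)) has_real_derivative uyy z) (at 0) \<and>
        isCont uxx z \<and> isCont uxy z \<and> isCont uyx z \<and> isCont uyy z \<and>
        uxx z + uyy z = 0)"

definition grad_norm :: "(complex \<Rightarrow> real) \<Rightarrow> complex \<Rightarrow> real" where
  "grad_norm u z = sqrt ((dx u z)\<^sup>2 + (dy u z)\<^sup>2)"

definition bloch_mu :: "(real \<Rightarrow> real) \<Rightarrow> (complex \<Rightarrow> real) set" where
  "bloch_mu \<mu> = {u. harmonic_on (ball 0 1) u \<and>
      (\<exists>C. \<forall>z\<in>ball 0 1. \<bar>u 0\<bar> + \<mu> (cmod z) * grad_norm u z \<le> C)}"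

end

theory Submission
  imports Defs
begin

lemma dir_deriv:
  fixes G :: "complex \<Rightarrow> complex"
  assumes "(G has_field_derivative D) (at w)"
  shows "((\<lambda>t::real. Re (G (w + v * of_real t))) has_real_derivative Re (v * D)) (at 0)"
    and "((\<lambda>t::real. Im (G (w + v * of_real t))) has_real_derivative Im (v * D)) (at 0)"
proof -
  have f: "((\<lambda>t::real. w + v * of_real t) has_vector_derivative v) (at 0)"
    by (auto intro!: derivative_eq_intros)
  have g: "(G has_field_derivative D) (at ((\<lambda>t::real. w + v * of_real t) 0))" using assms by simp
  from field_vector_diff_chain_at[OF f g]
  have h: "((G \<circ> (\<lambda>t. w + v * of_real t)) has_vector_derivative (v * D)) (at 0)" .
  show "((\<lambda>t::real. Re (G (w + v * of_real t))) has_real_derivative Re (v * D)) (at 0)"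
    using has_field_derivative_Re[OF h] by (simp add: o_def)
  show "((\<lambda>t::real. Im (G (w + v * of_real t))) has_real_derivative Im (v * D)) (at 0)"
    using has_field_derivative_Im[OF h] by (simp add: o_def)
qed

lemma exp_pow_bound:
  fixes x :: real assumes "0 \<le> x" shows "x ^ m / fact m \<le> exp x"
proof -
  have s: "summable (\<lambda>n. inverse (fact n) * x ^ n)"
    using summable_exp_generic[of x] by (simp add: divide_inverse ac_simps)
  have "sum (\<lambda>n. inverse (fact n) * x ^ n) {m} \<le> (\<Sum>n. inverse (fact n) * x ^ n)"
    by (rule sum_le_suminf[OF s]) (auto simp: assms)
  then show ?thesis by (simp add: exp_def divide_inverse ac_simps)
qed


lemma main_est:
  fixes \<mu> :: "real \<Rightarrow> real" and B lam :: real
    and n :: "nat \<Rightarrow> nat" and a :: "nat \<Rightarrow> complex"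
  assumes mu_pos: "\<forall>r\<in>{0..<1}. \<mu> r > 0"
    and mu_decr: "\<forall>r s. 0 \<le> r \<and> r \<le> s \<and> s < 1 \<longrightarrow> \<mu> s \<le> \<mu> r"
    and B_pos: "B > 0"
    and mu_doubling: "\<forall>d\<in>{0<..1}. \<mu> (1 - d / 2) \<ge> B * \<mu> (1 - d)"
    and mu_A: "\<forall>q>1. \<exists>A>1. \<exists>y0. \<forall>y>y0. \<forall>x>q*y. \<mu> (1 - 1/y) > A * \<mu> (1 - 1/x)"
    and n_pos: "\<forall>k. n k > 0"
    and lam: "lam > 1"
    and gap: "\<forall>k. real (n (Suc k)) \<ge> lam * real (n k)"
    and coeff: "bdd_above (range (\<lambda>k. real (n k) * cmod (a k) * \<mu> (1 - 1 / real (n k))))"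
  shows "\<exists>C. \<forall>r. 1/2 \<le> r \<and> r < 1 \<longrightarrow>
            (\<forall>K. (\<Sum>k<K. real (n k) * cmod (a k) * r ^ (n k - 1)) \<le> C / \<mu> r)"
proof -
  define phi where "phi x = 1 / \<mu> (1 - 1/x)" for x :: real
  obtain M where M: "\<And>k. real (n k) * cmod (a k) * \<mu> (1 - 1 / real (n k)) \<le> M"
    using coeff by (auto simp: bdd_above_def)
  have n1: "1 \<le> real (n k)" for k
  proof -
    have "1 \<le> n k" using n_pos by (simp add: Suc_le_eq)
    then show ?thesis by simp
  qed
  have mu_in: "0 < \<mu> (1 - 1/x)" if "1 \<le> x" for x :: real
  proof -
    have "0 \<le> 1 - 1/x" "1 - 1/x < 1" using that by (auto simp: field_simps)
    then show ?thesis using mu_pos by auto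
  qed
  have phi_pos: "0 < phi x" if "1 \<le> x" for x
    using mu_in[OF that] by (simp add: phi_def)
  have phi_mono: "phi x \<le> phi y" if "1 \<le> x" "x \<le> y" for x y
  proof -
    have "1/y \<le> 1/x" using that by (simp add: frac_le)
    moreover have "0 \<le> 1 - 1/x" "1 - 1/y < 1" using that by (auto simp: field_simps)
    ultimately have "\<mu> (1 - 1/y) \<le> \<mu> (1 - 1/x)" using mu_decr by auto
    then show ?thesis unfolding phi_def
      using mu_in[of y] that by (intro frac_le) auto
  qed
  define K where "K = max 1 (1/B)"
  have K1: "1 \<le> K" by (simp add: K_def)
  have phi_dbl: "phi y \<le> K * phi (y/2)" if "2 \<le> y" for y
  proof -
    have d: "2/y \<in> {0<..1}" using that by (auto simp: field_simps)
    have e1: "1 - (2/y)/2 = 1 - 1/y" by simp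
    have e2: "1 - 2/y = 1 - 1/(y/2)" by simp
    have h: "\<mu> (1 - 1/y) \<ge> B * \<mu> (1 - 1/(y/2))"
      using mu_doubling d e1 e2 by metis
    have p2: "0 < \<mu> (1 - 1/(y/2))" using mu_in[of "y/2"] that by simp
    have "phi y \<le> 1 / (B * \<mu> (1 - 1/(y/2)))" unfolding phi_def
      using h p2 B_pos by (intro frac_le) auto
    also have "\<dots> = (1/B) * phi (y/2)" by (simp add: phi_def)
    also have "\<dots> \<le> K * phi (y/2)"
      using phi_pos[of "y/2"] that by (intro mult_right_mono) (auto simp: K_def)
    finally show ?thesis .
  qed
  have phi_pow: "\<forall>x y. 1 \<le> x \<longrightarrow> x \<le> y \<longrightarrow> y \<le> 2^j * x \<longrightarrow> phi y \<le> K^j * phi x" for j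
  proof (induction j)
    case 0
    then show ?case using phi_mono by auto
  next
    case (Suc j)
    show ?case
    proof (intro allI impI)
      fix x y :: real assume x1: "1 \<le> x" and xy: "x \<le> y" and y2: "y \<le> 2 ^ Suc j * x"
      have Kj: "1 \<le> K^j" using K1 by simp
      show "phi y \<le> K ^ Suc j * phi x"
      proof (cases "y \<le> 2 * x")
        case True
        have "phi y \<le> phi (2*x)" using phi_mono True x1 xy by auto
        also have "\<dots> \<le> K * phi x" using phi_dbl[of "2*x"] x1 by simp
        also have "\<dots> \<le> K^j * (K * phi x)"
          using mult_right_mono[OF Kj, of "K * phi x"] phi_pos[OF x1] K1 by simp
        finally show ?thesis by (simp add: ac_simps)
      next
        case False
        have "phi (y/2) \<le> K^j * phi x" using Suc.IH x1 False y2 by auto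
        moreover have "phi y \<le> K * phi (y/2)" using phi_dbl False x1 by auto
        ultimately show ?thesis using K1 by (auto simp: ac_simps intro: order_trans mult_left_mono)
      qed
    qed
  qed
  obtain m :: nat where m: "K < 2^m" using real_arch_pow[of 2 K] by auto
  have phi_poly: "phi y \<le> (2*y/x)^m * phi x" if x1: "1 \<le> x" and xy: "x \<le> y" for x y
  proof -
    obtain j0 :: nat where "y/x < 2^j0" using real_arch_pow[of 2 "y/x"] by auto
    then have ex: "y \<le> 2^j0 * x" using x1 by (simp add: field_simps)
    define j where "j = (LEAST j. y \<le> 2^j * x)"
    have yj: "y \<le> 2^j * x" unfolding j_def by (rule LeastI[of _ j0]) (rule ex)
    have jle: "2^j \<le> 2*y/x"
    proof (cases j)
      case 0
      then show ?thesis using x1 xy by (simp add: field_simps)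
    next
      case (Suc i)
      have "i < j" using Suc by simp
      then have "\<not> y \<le> 2^i * x" unfolding j_def by (rule not_less_Least)
      then show ?thesis using Suc x1 by (simp add: field_simps)
    qed
    have "phi y \<le> K^j * phi x" using phi_pow x1 xy yj by blast
    also have "\<dots> \<le> (2^m)^j * phi x"
      using m K1 phi_pos[OF x1] by (intro mult_right_mono power_mono) auto
    also have "(2^m)^j = ((2::real)^j)^m" by (simp add: power_mult[symmetric] mult.commute)
    also have "((2::real)^j)^m * phi x \<le> (2*y/x)^m * phi x"
      using jle phi_pos[OF x1] by (intro mult_right_mono power_mono) auto
    finally show ?thesis .
  qed
  have q1: "(1+lam)/2 > 1" using lam by simp
  obtain A y0 where A1: "A > 1"
    and Ay: "\<forall>y>y0. \<forall>x>((1+lam)/2)*y. \<mu> (1 - 1/y) > A * \<mu> (1 - 1/x)"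
    using mu_A q1 by blast
  have n_chain: "A * phi (n k) \<le> phi (n (Suc k))" if "real (n k) > y0" for k
  proof -
    have "((1+lam)/2) * real (n k) < lam * real (n k)"
      using lam n1[of k] by (intro mult_strict_right_mono) auto
    then have "real (n (Suc k)) > ((1+lam)/2) * real (n k)" using gap by (meson less_le_trans)
    then have h: "\<mu> (1 - 1/real (n k)) > A * \<mu> (1 - 1/real (n (Suc k)))" using Ay that by blast
    have p1: "0 < \<mu> (1 - 1/real (n k))" using mu_in n1 by blast
    have p2: "0 < \<mu> (1 - 1/real (n (Suc k)))" using mu_in n1 by blast
    show ?thesis unfolding phi_def using h p1 p2 by (simp add: field_simps)
  qed
  have strict: "strict_mono n"
    unfolding strict_mono_Suc_iff
  proof
    fix k
    have "real (n k) < lam * real (n k)" using lam n1[of k] by simp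
    also have "\<dots> \<le> real (n (Suc k))" using gap by blast
    finally show "n k < n (Suc k)" by simp
  qed
  have nk: "real k + 1 \<le> real (n k)" for k
  proof (induction k)
    case 0 then show ?case using n1[of 0] by simp
  next
    case (Suc k)
    have "n k < n (Suc k)" using strict by (simp add: strict_mono_def)
    then show ?case using Suc by simp
  qed
  define k1 where "k1 = nat \<lceil>y0\<rceil>"
  have big: "real (n k) > y0" if "k1 \<le> k" for k
  proof -
    have "y0 \<le> real k1" unfolding k1_def by (rule real_nat_ceiling_ge)
    also have "\<dots> \<le> real k" using that by simp
    finally show ?thesis using nk[of k] by simp
  qed
  have Ag: "1 \<le> A/(A-1)" using A1 by (simp add: field_simps)
  have geo: "(\<Sum>k\<in>{k1..<k1 + Suc j}. phi (n k)) \<le> A/(A-1) * phi (n (k1+j))" for j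
  proof (induction j)
    case 0
    have "phi (n k1) \<le> A/(A-1) * phi (n k1)"
      using mult_right_mono[OF Ag, of "phi (n k1)"] phi_pos[OF n1[of k1]] by simp
    then show ?case by simp
  next
    case (Suc j)
    define p where "p = phi (n (k1+j))"
    define p' where "p' = phi (n (k1+Suc j))"
    have Ap: "A * p \<le> p'" unfolding p_def p'_def using n_chain[OF big[of "k1+j"]] by simp
    have "(\<Sum>k\<in>{k1..<k1 + Suc (Suc j)}. phi (n k)) = (\<Sum>k\<in>{k1..<k1 + Suc j}. phi (n k)) + p'"
      by (simp add: p'_def)
    also have "\<dots> \<le> A/(A-1) * p + p'" using Suc.IH by (simp add: p_def)
    also have "A/(A-1) * p = (A*p)/(A-1)" by simp
    also have "(A*p)/(A-1) \<le> p'/(A-1)" using Ap A1 by (intro divide_right_mono) auto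
    also have "p'/(A-1) + p' = A/(A-1) * p'" using A1 by (simp add: field_simps)
    finally show ?case by (simp add: p'_def)
  qed
  have M0: "0 \<le> M"
  proof -
    have "0 \<le> real (n 0) * cmod (a 0) * \<mu> (1 - 1 / real (n 0))"
      using mu_in[OF n1[of 0]] by simp
    then show ?thesis using M[of 0] by linarith
  qed
  have nlam: "lam^i * real (n j) \<le> real (n (j+i))" for i j
  proof (induction i)
    case 0 then show ?case by simp
  next
    case (Suc i)
    have "lam^(Suc i) * real (n j) = lam * (lam^i * real (n j))" by simp
    also have "\<dots> \<le> lam * real (n (j+i))" using Suc.IH lam by (intro mult_left_mono) auto
    also have "\<dots> \<le> real (n (j + Suc i))" using gap by simp
    finally show ?case .
  qed
  define rho where "rho = exp (-(lam-1)/2)"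
  have rho0: "0 < rho" and rho1: "rho < 1" using lam by (auto simp: rho_def)
  define c where "c = 2*M*4^m*fact m"
  have c0: "0 \<le> c" using M0 by (simp add: c_def)
  define C where "C = M * (real k1 + A/(A-1)) + c / (1 - rho)"
  show ?thesis
  proof (intro exI allI impI)
    fix r :: real and K :: nat assume r: "1/2 \<le> r \<and> r < 1"
    define N where "N = 1/(1-r)"
    have N2: "2 \<le> N" using r by (simp add: N_def field_simps)
    have rN: "1 - 1/N = r" using r by (simp add: N_def)
    have phiN: "phi N = 1 / \<mu> r" by (simp add: phi_def rN)
    have phiN0: "0 < phi N" using phi_pos N2 by simp
    define T where "T k = real (n k) * cmod (a k) * r^(n k - 1)" for k
    have T0: "0 \<le> T k" for k using r by (simp add: T_def)
    have TM: "T k \<le> M * phi (real (n k)) * r^(n k - 1)" for k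
    proof -
      have p: "0 < \<mu> (1 - 1/real (n k))" using mu_in n1 by blast
      have "real (n k) * cmod (a k) \<le> M / \<mu> (1 - 1/real (n k))"
        using M[of k] p by (simp add: field_simps)
      then have "real (n k) * cmod (a k) \<le> M * phi (real (n k))" by (simp add: phi_def)
      then show ?thesis unfolding T_def using r by (intro mult_right_mono) auto
    qed
    have ex: "\<exists>k. real (n k) > N"
    proof
      show "real (n (nat \<lceil>N\<rceil>)) > N"
        using nk[of "nat \<lceil>N\<rceil>"] real_nat_ceiling_ge[of N] by simp
    qed
    define k0 where "k0 = (LEAST k. real (n k) > N)"
    have below: "real (n k) \<le> N" if "k < k0" for k
      using not_less_Least[of k "\<lambda>k. real (n k) > N"] that unfolding k0_def by simp
    have nk0: "real (n k0) > N" unfolding k0_def by (rule LeastI_ex[OF ex])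
    have above: "real (n k) > N" if "k0 \<le> k" for k
    proof -
      have "n k0 \<le> n k" using strict that by (rule strict_mono_leD)
      then show ?thesis using nk0 by linarith
    qed
    have S: "(\<Sum>k<k0. phi (n k)) \<le> (real k1 + A/(A-1)) * phi N"
    proof (cases "k0 \<le> k1")
      case True
      have "(\<Sum>k<k0. phi (n k)) \<le> (\<Sum>k<k0. phi N)"
        using below phi_mono n1 by (intro sum_mono) auto
      also have "\<dots> = real k0 * phi N" by simp
      also have "\<dots> \<le> real k1 * phi N" using True phiN0 by (intro mult_right_mono) auto
      also have "\<dots> \<le> (real k1 + A/(A-1)) * phi N" using Ag phiN0 by (intro mult_right_mono) auto
      finally show ?thesis .
    next
      case False
      define j where "j = k0 - k1 - 1"
      have k0j: "k0 = k1 + Suc j" using False by (simp add: j_def)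
      have "(\<Sum>k<k0. phi (n k)) = (\<Sum>k\<in>{0..<k1}. phi (n k)) + (\<Sum>k\<in>{k1..<k0}. phi (n k))"
        using False by (simp add: atLeast0LessThan[symmetric] sum.atLeastLessThan_concat)
      also have "(\<Sum>k\<in>{0..<k1}. phi (n k)) \<le> (\<Sum>k\<in>{0..<k1}. phi N)"
        using below phi_mono n1 False by (intro sum_mono) auto
      also have "(\<Sum>k\<in>{0..<k1}. phi N) = real k1 * phi N" by simp
      also have "(\<Sum>k\<in>{k1..<k0}. phi (n k)) \<le> A/(A-1) * phi (n (k1+j))"
        using geo[of j] k0j by simp
      also have "A/(A-1) * phi (n (k1+j)) \<le> A/(A-1) * phi N"
        using below[of "k1+j"] k0j phi_mono n1 Ag by (intro mult_left_mono) auto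
      finally show ?thesis by (simp add: algebra_simps)
    qed
    have P1: "(\<Sum>k<k0. T k) \<le> M * (real k1 + A/(A-1)) * phi N"
    proof -
      have "(\<Sum>k<k0. T k) \<le> (\<Sum>k<k0. M * phi (n k))"
      proof (intro sum_mono)
        fix k assume "k \<in> {..<k0}"
        have "T k \<le> M * phi (real (n k)) * r^(n k - 1)" by (rule TM)
        also have "\<dots> \<le> M * phi (real (n k)) * 1"
          using r M0 phi_pos[OF n1[of k]] by (intro mult_left_mono power_le_one) auto
        finally show "T k \<le> M * phi (n k)" by simp
      qed
      also have "\<dots> = M * (\<Sum>k<k0. phi (n k))" by (simp add: sum_distrib_left)
      also have "\<dots> \<le> M * ((real k1 + A/(A-1)) * phi N)" using S M0 by (rule mult_left_mono)
      finally show ?thesis by (simp add: ac_simps)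
    qed
    have P2: "T k \<le> c * phi N * rho^(k-k0)" if "k0 \<le> k" for k
    proof -
      define t where "t = real (n k) / N"
      define i where "i = k - k0"
      have ki: "k = k0 + i" using that by (simp add: i_def)
      have t0: "0 \<le> t" using N2 by (simp add: t_def)
      have t1: "lam^i \<le> t"
      proof -
        have "lam^i * N \<le> lam^i * real (n k0)" using nk0 lam by (intro mult_left_mono) auto
        also have "\<dots> \<le> real (n k)" using nlam[of i k0] ki by simp
        finally show ?thesis using N2 by (simp add: t_def field_simps)
      qed
      have phik: "phi (n k) \<le> (2*t)^m * phi N"
        using phi_poly[of N "real (n k)"] N2 above[OF that] by (simp add: t_def)
      have rpow: "r^(n k - 1) \<le> 2 * exp (-t)"
      proof -
        have "r^(n k) = r * r^(n k - 1)"
          using n1[of k] by (metis One_nat_def Suc_pred n_pos power_Suc)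
        moreover have z: "0 \<le> r^(n k - 1)" using r by simp
        moreover have "(1/2) * r^(n k - 1) \<le> r * r^(n k - 1)" using r z by (intro mult_right_mono) auto
        ultimately have a1: "r^(n k - 1) \<le> 2 * r^(n k)" by linarith
        have "r \<le> exp (-1/N)" using exp_ge_add_one_self[of "-1/N"] rN by simp
        then have "r^(n k) \<le> exp (-1/N) ^ (n k)" using r by (intro power_mono) auto
        also have "\<dots> = exp (-t)" by (simp add: exp_of_nat_mult[symmetric] t_def)
        finally show ?thesis using a1 by simp
      qed
      have poly: "(2*t)^m * exp (-t) \<le> 4^m * fact m * exp (-t/2)"
      proof -
        have "(t/2)^m / fact m \<le> exp (t/2)" using t0 by (intro exp_pow_bound) simp
        then have "(t/2)^m \<le> fact m * exp (t/2)" by (simp add: field_simps)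
        then have "4^m * (t/2)^m \<le> 4^m * (fact m * exp (t/2))" by simp
        moreover have "(2*t)^m = 4^m * (t/2)^m"
        proof -
          have "(2*t)^m = (4*(t/2))^m" by simp
          also have "\<dots> = 4^m * (t/2)^m" by (rule power_mult_distrib)
          finally show ?thesis .
        qed
        ultimately have "(2*t)^m \<le> 4^m * fact m * exp (t/2)" by simp
        then have "(2*t)^m * exp (-t) \<le> 4^m * fact m * exp (t/2) * exp (-t)" by simp
        also have "\<dots> = 4^m * fact m * exp (-t/2)" by (simp add: mult.assoc exp_add[symmetric])
        finally show ?thesis .
      qed
      have erho: "exp (-t/2) \<le> rho^i"
      proof -
        have "1 + real i * (lam - 1) \<le> (1 + (lam - 1))^i"
          using lam by (intro Bernoulli_inequality) simp
        then have "real i * (lam - 1) \<le> t" using t1 by simp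
        then have "-t/2 \<le> real i * (-(lam-1)/2)" by (simp add: algebra_simps)
        then have "exp (-t/2) \<le> exp (real i * (-(lam-1)/2))" by simp
        also have "\<dots> = rho^i" unfolding rho_def by (rule exp_of_nat_mult)
        finally show ?thesis .
      qed
      have "T k \<le> M * (phi (real (n k)) * r^(n k - 1))" using TM by (simp add: ac_simps)
      also have "phi (real (n k)) * r^(n k - 1) \<le> ((2*t)^m * phi N) * (2 * exp (-t))"
        using phik rpow phi_pos[OF n1[of k]] r by (intro mult_mono) auto
      also have "\<dots> = 2 * phi N * ((2*t)^m * exp (-t))" by (simp add: ac_simps)
      also have "\<dots> \<le> 2 * phi N * (4^m * fact m * exp (-t/2))"
        using poly phiN0 by (intro mult_left_mono) auto
      also have "\<dots> \<le> 2 * phi N * (4^m * fact m * rho^i)"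
        using erho phiN0 by (intro mult_left_mono) auto
      finally have "T k \<le> M * (2 * phi N * (4^m * fact m * rho^i))" using M0 by (simp add: mult_left_mono)
      then show ?thesis by (simp add: c_def i_def ac_simps)
    qed
    have P2sum: "(\<Sum>k\<in>{k0..<K'}. T k) \<le> c / (1 - rho) * phi N" for K'
    proof (cases "K' \<le> k0")
      case True
      then show ?thesis using c0 rho1 phiN0 by simp
    next
      case False
      have "(\<Sum>k\<in>{k0..<K'}. T k) \<le> (\<Sum>k\<in>{k0..<K'}. c * phi N * rho^(k-k0))"
        using P2 by (intro sum_mono) auto
      also have "\<dots> = c * phi N * (\<Sum>k\<in>{k0..<K'}. rho^(k-k0))" by (simp add: sum_distrib_left)
      finally have s1: "(\<Sum>k\<in>{k0..<K'}. T k) \<le> c * phi N * (\<Sum>k\<in>{k0..<K'}. rho^(k-k0))" .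
      have "(\<Sum>k\<in>{k0..<K'}. rho^(k-k0)) = (\<Sum>i\<in>{0..<K'-k0}. rho^i)"
        using sum.shift_bounds_nat_ivl[of "\<lambda>k. rho^(k-k0)" 0 k0 "K'-k0"] False by simp
      also have "\<dots> = (1 - rho^(K'-k0)) / (1 - rho)"
        using rho1 by (simp add: atLeast0LessThan sum_gp_strict)
      also have "\<dots> \<le> 1 / (1 - rho)" using rho0 rho1 by (intro divide_right_mono) auto
      finally have s2: "(\<Sum>k\<in>{k0..<K'}. rho^(k-k0)) \<le> 1 / (1 - rho)" .
      have "c * phi N * (\<Sum>k\<in>{k0..<K'}. rho^(k-k0)) \<le> c * phi N * (1 / (1 - rho))"
        using s2 c0 phiN0 by (intro mult_left_mono) auto
      with s1 show ?thesis by simp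
    qed
    define K' where "K' = max K k0"
    have "(\<Sum>k<K. T k) \<le> (\<Sum>k<K'. T k)"
      using T0 by (intro sum_mono2) (auto simp: K'_def)
    also have "\<dots> = (\<Sum>k<k0. T k) + (\<Sum>k\<in>{k0..<K'}. T k)"
      by (simp add: K'_def atLeast0LessThan[symmetric] sum.atLeastLessThan_concat)
    also have "\<dots> \<le> M * (real k1 + A/(A-1)) * phi N + c / (1 - rho) * phi N"
      using P1 P2sum by (rule add_mono)
    also have "\<dots> = C * phi N" by (simp add: C_def distrib_right)
    also have "\<dots> = C / \<mu> r" by (simp add: phiN)
    finally show "(\<Sum>k<K. real (n k) * cmod (a k) * r ^ (n k - 1)) \<le> C / \<mu> r"
      by (simp add: T_def)
  qed
qed


theorem corollary7:
  fixes \<mu> :: "real \<Rightarrow> real" and B lam :: real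
    and n :: "nat \<Rightarrow> nat" and a :: "nat \<Rightarrow> complex"
  assumes mu_pos: "\<forall>r\<in>{0..<1}. \<mu> r > 0"
    and mu_decr: "\<forall>r s. 0 \<le> r \<and> r \<le> s \<and> s < 1 \<longrightarrow> \<mu> s \<le> \<mu> r"
    and mu_cont: "continuous_on {0..<1} \<mu>"
    and mu_lim: "(\<mu> \<longlongrightarrow> 0) (at_left 1)"
    and B_pos: "B > 0"
    and mu_doubling: "\<forall>d\<in>{0<..1}. \<mu> (1 - d / 2) \<ge> B * \<mu> (1 - d)"
    and mu_A: "\<forall>q>1. \<exists>A>1. \<exists>y0. \<forall>y>y0. \<forall>x>q*y. \<mu> (1 - 1/y) > A * \<mu> (1 - 1/x)"
    and n_pos: "\<forall>k. n k > 0"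
    and lam: "lam > 1"
    and gap: "\<forall>k. real (n (Suc k)) \<ge> lam * real (n k)"
    and coeff: "bdd_above (range (\<lambda>k. real (n k) * cmod (a k) * \<mu> (1 - 1 / real (n k))))"
  shows "(\<forall>z\<in>ball 0 1. summable (\<lambda>k. a k * z ^ n k)) \<and>
         (\<lambda>z. Re (\<Sum>k. a k * z ^ n k)) \<in> bloch_mu \<mu>"
proof -
  obtain C where C: "\<forall>r. 1/2 \<le> r \<and> r < 1 \<longrightarrow>
            (\<forall>K. (\<Sum>k<K. real (n k) * cmod (a k) * r ^ (n k - 1)) \<le> C / \<mu> r)"
    using main_est[OF mu_pos mu_decr B_pos mu_doubling mu_A n_pos lam gap coeff] by (elim exE) (rule that)
  define T where "T r k = real (n k) * cmod (a k) * r^(n k - 1)" for r k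
  have n1: "1 \<le> n k" for k using n_pos by (simp add: Suc_le_eq)
  have nne: "n k \<noteq> 0" for k using n_pos by simp
  have strict: "strict_mono n"
    unfolding strict_mono_Suc_iff
  proof
    fix k
    have "real (n k) < lam * real (n k)" using lam n1[of k] by simp
    also have "\<dots> \<le> real (n (Suc k))" using gap by blast
    finally show "n k < n (Suc k)" by simp
  qed
  have injn: "inj n" using strict by (simp add: inj_on_def strict_mono_eq)
  have mu_in: "0 < \<mu> r" if "0 \<le> r" "r < 1" for r using mu_pos that by auto
  have Tnn: "0 \<le> T r k" if "0 \<le> r" for r k using that by (simp add: T_def)
  have big: "summable (T r) \<and> suminf (T r) \<le> C / \<mu> r" if "1/2 \<le> r" "r < 1" for r
  proof -
    have b: "(\<Sum>k<K. T r k) \<le> C / \<mu> r" for K using C that by (simp add: T_def)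
    have s: "summable (T r)" using that by (intro summableI_nonneg_bounded[OF Tnn b]) auto
    then show ?thesis using suminf_le_const[OF s b] by simp
  qed
  have Tmono: "T r k \<le> T s k" if "0 \<le> r" "r \<le> s" for r s k
  proof -
    have "r^(n k - 1) \<le> s^(n k - 1)" using that by (intro power_mono)
    then show ?thesis unfolding T_def by (intro mult_left_mono) auto
  qed
  have sumT: "summable (T r)" if "0 \<le> r" "r < 1" for r
  proof (cases "1/2 \<le> r")
    case True then show ?thesis using big that by blast
  next
    case False
    have s: "summable (T (1/2))" using big by simp
    have "norm (T r k) \<le> T (1/2) k" for k
    proof -
      have "norm (T r k) = T r k" using Tnn[OF that(1)] by simp
      also have "\<dots> \<le> T (1/2) k" using False that(1) by (intro Tmono) auto
      finally show ?thesis .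
    qed
    note b = this
    show ?thesis by (rule summable_comparison_test'[OF s]) (rule b)
  qed
  define Cb where "Cb = max C (\<mu> 0 * (C / \<mu> (1/2)))"
  have boundT: "\<mu> r * suminf (T r) \<le> Cb" if "0 \<le> r" "r < 1" for r
  proof (cases "1/2 \<le> r")
    case True
    then have "\<mu> r * suminf (T r) \<le> \<mu> r * (C / \<mu> r)"
      using big[of r] that mu_in[of r] by (intro mult_left_mono) auto
    also have "\<dots> = C" using mu_in[of r] that by simp
    finally show ?thesis by (simp add: Cb_def)
  next
    case False
    have S0: "0 \<le> suminf (T r)" using sumT[OF that] Tnn that by (intro suminf_nonneg) auto
    have "\<mu> r * suminf (T r) \<le> \<mu> 0 * suminf (T r)"
      using mu_decr that S0 by (intro mult_right_mono) auto
    also have "suminf (T r) \<le> suminf (T (1/2))"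
      using Tmono[of r "1/2"] False that sumT by (intro suminf_le) auto
    also have "\<dots> \<le> C / \<mu> (1/2)" using big by simp
    finally have "\<mu> r * suminf (T r) \<le> \<mu> 0 * (C / \<mu> (1/2))"
      using mu_in[of 0] by (simp add: mult_left_mono)
    then show ?thesis by (simp add: Cb_def)
  qed
  have asum: "summable (\<lambda>k. a k * z ^ n k)" if "norm z < 1" for z :: complex
  proof -
    have "norm (a k * z ^ n k) \<le> T (norm z) k" for k
    proof -
      have "norm z ^ n k \<le> norm z ^ (n k - 1)" using that by (intro power_decreasing) auto
      also have "\<dots> \<le> real (n k) * norm z ^ (n k - 1)"
        using mult_right_mono[of 1 "real (n k)" "norm z ^ (n k - 1)"] n1[of k] by simp
      finally have "norm z ^ n k \<le> real (n k) * norm z ^ (n k - 1)" .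
      then have "cmod (a k) * norm z ^ n k \<le> cmod (a k) * (real (n k) * norm z ^ (n k - 1))"
        by (intro mult_left_mono) auto
      then show ?thesis by (simp add: T_def norm_mult norm_power ac_simps)
    qed
    note b = this
    have s2: "summable (T (norm z))" using sumT[of "norm z"] that by simp
    show ?thesis by (rule summable_comparison_test'[OF s2]) (rule b)
  qed
  define c where "c m = (if m \<in> range n then a (inv n m) else 0)" for m
  have cn: "c (n k) = a k" for k using injn by (simp add: c_def)
  have cz: "c m = 0" if "m \<notin> range n" for m using that by (simp add: c_def)
  have reidx: "(\<lambda>k. a k * x ^ n k) = (\<lambda>k. (\<lambda>m. c m * x ^ m) (n k))" for x :: complex
    by (simp add: cn)
  have csum: "summable (\<lambda>m. c m * x ^ m)" if "norm x < 1" for x :: complex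
  proof -
    have "summable (\<lambda>k. (\<lambda>m. c m * x ^ m) (n k))" using asum[OF that] reidx by metis
    then show ?thesis using summable_mono_reindex[OF strict, of "\<lambda>m. c m * x ^ m"] cz by auto
  qed
  have d1: "summable (\<lambda>m. diffs c m * x ^ m)" if "norm x < 1" for x :: complex
    using termdiff_converges[of x 1 c] csum that by blast
  have d2: "summable (\<lambda>m. diffs (diffs c) m * x ^ m)" if "norm x < 1" for x :: complex
    using termdiff_converges[of x 1 "diffs c"] d1 that by blast
  define F where "F x = (\<Sum>m. c m * x ^ m)" for x :: complex
  define F1 where "F1 x = (\<Sum>m. diffs c m * x ^ m)" for x :: complex
  define F2 where "F2 x = (\<Sum>m. diffs (diffs c) m * x ^ m)" for x :: complex
  define F3 where "F3 x = (\<Sum>m. diffs (diffs (diffs c)) m * x ^ m)" for x :: complex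
  have DF: "(F has_field_derivative F1 z) (at z)" if "norm z < 1" for z
    unfolding F_def F1_def using termdiffs_strong'[of 1 c z] csum that by blast
  have DF1: "(F1 has_field_derivative F2 z) (at z)" if "norm z < 1" for z
    unfolding F1_def F2_def using termdiffs_strong'[of 1 "diffs c" z] d1 that by blast
  have DF2: "(F2 has_field_derivative F3 z) (at z)" if "norm z < 1" for z
    unfolding F2_def F3_def using termdiffs_strong'[of 1 "diffs (diffs c)" z] d2 that by blast
  have ueq: "(\<lambda>z. Re (\<Sum>k. a k * z ^ n k)) = (\<lambda>z. Re (F z))"
  proof
    fix z :: complex
    have "(\<Sum>k. a k * z ^ n k) = (\<Sum>k. (\<lambda>m. c m * z ^ m) (n k))" using reidx by metis
    also have "\<dots> = F z" unfolding F_def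
      by (rule suminf_mono_reindex[OF strict]) (simp add: cz)
    finally show "Re (\<Sum>k. a k * z ^ n k) = Re (F z)" by simp
  qed
  have H: "((\<lambda>t. Re (F (z + of_real t))) has_real_derivative Re (F1 z)) (at 0) \<and>
        ((\<lambda>t. Re (F (z + \<i> * of_real t))) has_real_derivative - Im (F1 z)) (at 0) \<and>
        ((\<lambda>t. Re (F1 (z + of_real t))) has_real_derivative Re (F2 z)) (at 0) \<and>
        ((\<lambda>t. Re (F1 (z + \<i> * of_real t))) has_real_derivative Re (\<i> * F2 z)) (at 0) \<and>
        ((\<lambda>t. - Im (F1 (z + of_real t))) has_real_derivative - Im (F2 z)) (at 0) \<and>
        ((\<lambda>t. - Im (F1 (z + \<i> * of_real t))) has_real_derivative - Im (\<i> * F2 z)) (at 0) \<and>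
        isCont (\<lambda>z. Re (F2 z)) z \<and> isCont (\<lambda>z. Re (\<i> * F2 z)) z \<and>
        isCont (\<lambda>z. - Im (F2 z)) z \<and> isCont (\<lambda>z. - Im (\<i> * F2 z)) z \<and>
        Re (F2 z) + - Im (\<i> * F2 z) = 0" if z: "norm z < 1" for z
  proof (intro conjI)
    show "((\<lambda>t. Re (F (z + of_real t))) has_real_derivative Re (F1 z)) (at 0)"
      using dir_deriv(1)[OF DF[OF z], of 1] by simp
    show "((\<lambda>t. Re (F (z + \<i> * of_real t))) has_real_derivative - Im (F1 z)) (at 0)"
      using dir_deriv(1)[OF DF[OF z], of \<i>] by simp
    show "((\<lambda>t. Re (F1 (z + of_real t))) has_real_derivative Re (F2 z)) (at 0)"
      using dir_deriv(1)[OF DF1[OF z], of 1] by simp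
    show "((\<lambda>t. Re (F1 (z + \<i> * of_real t))) has_real_derivative Re (\<i> * F2 z)) (at 0)"
      using dir_deriv(1)[OF DF1[OF z], of \<i>] .
    show "((\<lambda>t. - Im (F1 (z + of_real t))) has_real_derivative - Im (F2 z)) (at 0)"
      using DERIV_minus[OF dir_deriv(2)[OF DF1[OF z], of 1]] by simp
    show "((\<lambda>t. - Im (F1 (z + \<i> * of_real t))) has_real_derivative - Im (\<i> * F2 z)) (at 0)"
      using DERIV_minus[OF dir_deriv(2)[OF DF1[OF z], of \<i>]] .
    have c2: "isCont F2 z" using DF2[OF z] by (rule DERIV_isCont)
    have c3: "isCont (\<lambda>z. \<i> * F2 z) z" using c2 by (intro continuous_intros)
    show "isCont (\<lambda>z. Re (F2 z)) z" using c2 by simp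
    show "isCont (\<lambda>z. Re (\<i> * F2 z)) z" using isCont_Re[OF c3] .
    show "isCont (\<lambda>z. - Im (F2 z)) z" using isCont_minus[OF isCont_Im[OF c2]] .
    show "isCont (\<lambda>z. - Im (\<i> * F2 z)) z" using isCont_minus[OF isCont_Im[OF c3]] .
    show "Re (F2 z) + - Im (\<i> * F2 z) = 0" by simp
  qed
  have ballz: "z \<in> ball 0 1 \<longleftrightarrow> norm z < 1" for z :: complex by simp
  have harm: "harmonic_on (ball 0 1) (\<lambda>z. Re (F z))"
    unfolding harmonic_on_def
    apply (rule conjI, simp)
    apply (rule exI[where x="\<lambda>z. Re (F1 z)"], rule exI[where x="\<lambda>z. - Im (F1 z)"],
        rule exI[where x="\<lambda>z. Re (F2 z)"], rule exI[where x="\<lambda>z. Re (\<i> * F2 z)"],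
        rule exI[where x="\<lambda>z. - Im (F2 z)"], rule exI[where x="\<lambda>z. - Im (\<i> * F2 z)"])
    using H ballz by blast
  have grad: "grad_norm (\<lambda>z. Re (F z)) z = cmod (F1 z)" if z: "norm z < 1" for z
  proof -
    have "dx (\<lambda>z. Re (F z)) z = Re (F1 z)" unfolding dx_def
      by (rule DERIV_imp_deriv) (use H[OF z] in blast)
    moreover have "dy (\<lambda>z. Re (F z)) z = - Im (F1 z)" unfolding dy_def
      by (rule DERIV_imp_deriv) (use H[OF z] in blast)
    ultimately show ?thesis unfolding grad_norm_def norm_complex_def by simp
  qed
  have F1b: "cmod (F1 z) \<le> suminf (T (cmod z))" if z: "norm z < 1" for z
  proof -
    define e where "e m = of_nat m * c m * z ^ (m - 1)" for m
    have "(\<lambda>m. diffs c m * z ^ m) sums F1 z" using d1[OF z] unfolding F1_def by (simp add: summable_sums)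
    moreover have "(\<lambda>m. diffs c m * z ^ m) = (\<lambda>m. e (Suc m))" by (simp add: e_def diffs_def fun_eq_iff)
    ultimately have "(\<lambda>m. e (Suc m)) sums F1 z" by simp
    then have es0: "e sums F1 z" using sums_Suc_iff[of e "F1 z"] by (simp add: e_def)
    have ez: "\<And>m. m \<notin> range n \<Longrightarrow> e m = 0" by (simp add: e_def cz)
    have es: "(\<lambda>k. e (n k)) sums F1 z" using sums_mono_reindex[of n e "F1 z", OF strict] ez es0 by blast
    have en: "norm (e (n k)) = T (cmod z) k" for k by (simp add: e_def cn norm_mult norm_power T_def)
    have sn: "summable (\<lambda>k. norm (e (n k)))" unfolding en using sumT[of "cmod z"] z by simp
    have "F1 z = (\<Sum>k. e (n k))" using es by (simp add: sums_unique)
    then have "cmod (F1 z) \<le> (\<Sum>k. norm (e (n k)))" using summable_norm[OF sn] by simp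
    also have "\<dots> = suminf (T (cmod z))" unfolding en ..
    finally show ?thesis .
  qed
  have c00: "c 0 = 0" using cz nne by (metis image_iff)
  have F0: "F 0 = 0" unfolding F_def using c00 by simp
  show ?thesis
  proof (intro conjI ballI)
    fix z :: complex assume "z \<in> ball 0 1"
    then show "summable (\<lambda>k. a k * z ^ n k)" using asum by simp
  next
    show "(\<lambda>z. Re (\<Sum>k. a k * z ^ n k)) \<in> bloch_mu \<mu>"
      unfolding ueq bloch_mu_def
    proof (intro CollectI conjI harm exI[where x=Cb] ballI)
      fix z :: complex assume "z \<in> ball 0 1"
      then have z: "norm z < 1" by simp
      have "\<mu> (cmod z) * cmod (F1 z) \<le> \<mu> (cmod z) * suminf (T (cmod z))"
        using F1b[OF z] mu_in[of "cmod z"] z by (intro mult_left_mono) auto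
      also have "\<dots> \<le> Cb" using boundT[of "cmod z"] z by simp
      finally show "\<bar>Re (F 0)\<bar> + \<mu> (cmod z) * grad_norm (\<lambda>z. Re (F z)) z \<le> Cb"
        using F0 grad[OF z] by simp
    qed
  qed
qed

end
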